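(* Let $\Omega\subset\mathbb{R}^{n+1}$ be a compact convex body with $C^1$ boundary containing $0$ in its interior, and let $(\Omega_k)_{k\ge1}$ be a sequence of smooth uniformly convex bodies converging to $\Omega$ in Hausdorff distance. Then there exists a constant $C_\Omega>0$ depending only on $\Omega$ such that $d_{\partial\Omega_k}(X,Y)\le C_\Omega|X-Y|$ for all $X,Y\in\partial\Omega_k$ and all $k$ sufficiently large.
   Context: For a body $D$, $d_{\partial D}(X_1,X_2):=\inf\int_0^1|\dot\sigma(t)|dt$ over $C^1$ curves $\sigma$ in $\partial D$ from $X_1$ to $X_2$. A convex set $D$ is uniformly convex if there is $R>0$ with $D\subset B^{n+1}_R(X-R\nu)$ for every $X\in\partial D$ and every outward unit normal $\nu$ at $X$. Hausdorff distance: $d_H(A,B)=\max(\sup_{a\in A}\mathrm{dist}(a,B),\sup_{b\in B}\mathrm{dist}(b,A))$. *)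

theory Defs
  imports "HOL-Analysis.Analysis"
begin

definition hausdorff_dist :: "'a::metric_space set \<Rightarrow> 'a set \<Rightarrow> real" where
  "hausdorff_dist A B =
     max (SUP a\<in>A. infdist a B) (SUP b\<in>B. infdist b A)"

definition convex_body :: "'a::euclidean_space set \<Rightarrow> bool" where
  "convex_body D \<longleftrightarrow> compact D \<and> convex D \<and> interior D \<noteq> {}"

fun Ck_on :: "nat \<Rightarrow> 'a::euclidean_space set \<Rightarrow> ('a \<Rightarrow> real) \<Rightarrow> bool" where
  "Ck_on 0 U f = continuous_on U f"
| "Ck_on (Suc k) U f =
     (\<exists>g. (\<forall>y\<in>U. (f has_derivative (\<lambda>h. g y \<bullet> h)) (at y))
          \<and> (\<forall>b\<in>Basis. Ck_on k U (\<lambda>y. g y \<bullet> b)))"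

definition smooth_fun_on :: "'a::euclidean_space set \<Rightarrow> ('a \<Rightarrow> real) \<Rightarrow> bool" where
  "smooth_fun_on U f \<longleftrightarrow> (\<forall>k. Ck_on k U f)"

definition C1_boundary :: "'a::euclidean_space set \<Rightarrow> bool" where
  "C1_boundary D \<longleftrightarrow>
     (\<forall>X\<in>frontier D. \<exists>U \<rho> g. open U \<and> X \<in> U
        \<and> (\<forall>y\<in>U. (\<rho> has_derivative (\<lambda>h. g y \<bullet> h)) (at y) \<and> g y \<noteq> 0)
        \<and> continuous_on U g
        \<and> D \<inter> U = {y\<in>U. \<rho> y \<le> 0})"

definition smooth_boundary :: "'a::euclidean_space set \<Rightarrow> bool" where
  "smooth_boundary D \<longleftrightarrow>
     (\<forall>X\<in>frontier D. \<exists>U \<rho> g. open U \<and> X \<in> U \<and> smooth_fun_on U \<rho>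
        \<and> (\<forall>y\<in>U. (\<rho> has_derivative (\<lambda>h. g y \<bullet> h)) (at y) \<and> g y \<noteq> 0)
        \<and> D \<inter> U = {y\<in>U. \<rho> y \<le> 0})"

definition outward_unit_normal :: "'a::euclidean_space set \<Rightarrow> 'a \<Rightarrow> 'a \<Rightarrow> bool" where
  "outward_unit_normal D X \<nu> \<longleftrightarrow> norm \<nu> = 1 \<and> (\<forall>Y\<in>D. \<nu> \<bullet> (Y - X) \<le> 0)"

definition uniformly_convex :: "'a::euclidean_space set \<Rightarrow> bool" where
  "uniformly_convex D \<longleftrightarrow> convex D \<and>
     (\<exists>R>0. \<forall>X\<in>frontier D. \<forall>\<nu>. outward_unit_normal D X \<nu> \<longrightarrow> D \<subseteq> cball (X - R *\<^sub>R \<nu>) R)"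

text \<open>Intrinsic distance on the boundary of D: infimum of the lengths of
  C^1 curves in the boundary joining X1 to X2 (value \<infinity> if there is none).\<close>
definition boundary_dist :: "'a::euclidean_space set \<Rightarrow> 'a \<Rightarrow> 'a \<Rightarrow> ereal" where
  "boundary_dist D X1 X2 =
     Inf (ereal ` {integral {0..1} (\<lambda>t. norm (\<sigma>' t)) | \<sigma> \<sigma>'.
        (\<forall>t\<in>{0..1}. (\<sigma> has_vector_derivative \<sigma>' t) (at t within {0..1::real}))
        \<and> continuous_on {0..1} \<sigma>'
        \<and> \<sigma> ` {0..1} \<subseteq> frontier D \<and> \<sigma> 0 = X1 \<and> \<sigma> 1 = X2})"

end

theory Submission
  imports Defs
begin


definition gauge_of :: "'a::euclidean_space set \<Rightarrow> 'a \<Rightarrow> real" where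
  "gauge_of K y = Inf {t. 0 < t \<and> inverse t *\<^sub>R y \<in> K}"

locale gk =
  fixes K :: "'a::euclidean_space set" and r R :: real
  assumes cK: "compact K" and vK: "convex K" and r: "0 < r"
    and inK: "cball 0 r \<subseteq> K" and outK: "K \<subseteq> cball 0 R"
begin

lemma closedK: "closed K" using cK compact_imp_closed by blast
lemma zeroK: "0 \<in> K" using inK r by auto
lemma ball_int: "ball 0 r \<subseteq> interior K"
  using inK ball_subset_cball interior_maximal open_ball by (metis subset_trans)
lemma zero_int: "0 \<in> interior K"
  using ball_int r by auto
lemma Rpos: "0 < R"
proof -
  obtain b :: 'a where b: "b \<in> Basis" using nonempty_Basis by blast
  then have "r *\<^sub>R b \<in> cball 0 r" using r by simp
  then have "r *\<^sub>R b \<in> cball 0 R" using inK outK by blast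
  then have "norm (r *\<^sub>R b) \<le> R" by simp
  then show ?thesis using b r by simp
qed

lemma upward: assumes "0 < t" "inverse t *\<^sub>R y \<in> K" "t \<le> s"
  shows "inverse s *\<^sub>R y \<in> K"
proof -
  have "inverse s *\<^sub>R y = (t / s) *\<^sub>R (inverse t *\<^sub>R y) + (1 - t/s) *\<^sub>R 0"
    using assms by (simp add: field_simps)
  also have "\<dots> \<in> K"
    using assms by (intro convexD[OF vK]) (auto simp: zeroK divide_simps)
  finally show ?thesis .
qed

lemma set_ne: "\<exists>t. 0 < t \<and> inverse t *\<^sub>R y \<in> K"
proof -
  define t where "t = norm y / r + 1"
  have "norm y / r \<ge> 0" using r by simp
  then have t: "t > 0" by (simp add: t_def)
  have "norm (inverse t *\<^sub>R y) \<le> r"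
  proof -
    have "norm y \<le> r * t" using r by (simp add: t_def field_simps)
    then show ?thesis using t r by (simp add: field_simps)
  qed
  then have "inverse t *\<^sub>R y \<in> cball 0 r" by simp
  then show ?thesis using t inK by blast
qed

lemma bdd: "bdd_below {t. 0 < t \<and> inverse t *\<^sub>R y \<in> K}"
  by (rule bdd_belowI[of _ 0]) auto

lemma gauge_le: "0 < s \<Longrightarrow> inverse s *\<^sub>R y \<in> K \<Longrightarrow> gauge_of K y \<le> s"
  unfolding gauge_of_def by (rule cInf_lower) (auto simp: bdd)

lemma gauge_nonneg: "0 \<le> gauge_of K y"
  unfolding gauge_of_def using set_ne by (intro cInf_greatest) auto

lemma gauge_lower: assumes "y \<noteq> 0" shows "norm y / R \<le> gauge_of K y"
  unfolding gauge_of_def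
proof (rule cInf_greatest)
  show "{t. 0 < t \<and> inverse t *\<^sub>R y \<in> K} \<noteq> {}" using set_ne by auto
  fix t assume "t \<in> {t. 0 < t \<and> inverse t *\<^sub>R y \<in> K}"
  then have t: "0 < t" "norm (inverse t *\<^sub>R y) \<le> R" using outK by auto
  then have "norm y \<le> R * t" by (simp add: field_simps)
  then show "norm y / R \<le> t" using Rpos by (simp add: field_simps)
qed

lemma gauge_pos: "y \<noteq> 0 \<Longrightarrow> 0 < gauge_of K y"
proof -
  assume y: "y \<noteq> 0"
  have "0 < norm y / R" using y Rpos by simp
  then show ?thesis using gauge_lower[OF y] by linarith
qed

lemma gt_gauge: assumes "y \<noteq> 0" "gauge_of K y < s" shows "inverse s *\<^sub>R y \<in> K"
proof -
  have "\<exists>t\<in>{t. 0 < t \<and> inverse t *\<^sub>R y \<in> K}. t < s"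
    using assms(2) set_ne unfolding gauge_of_def by (subst (asm) cInf_less_iff) (auto simp: bdd)
  then obtain t where "0 < t" "inverse t *\<^sub>R y \<in> K" "t < s" by auto
  then show ?thesis using upward[of t y s] by simp
qed

lemma at_gauge: assumes "y \<noteq> 0" shows "inverse (gauge_of K y) *\<^sub>R y \<in> K"
proof -
  let ?g = "gauge_of K y"
  have g: "0 < ?g" using gauge_pos assms by auto
  have "((\<lambda>s. inverse s *\<^sub>R y) \<longlongrightarrow> inverse ?g *\<^sub>R y) (at_right ?g)"
    using g by (intro tendsto_intros) auto
  moreover have "eventually (\<lambda>s. inverse s *\<^sub>R y \<in> K) (at_right ?g)"
    using gt_gauge[OF assms] by (auto simp: eventually_at_right_field intro: exI[of _ "?g + 1"])
  ultimately show ?thesis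
    by (intro Lim_in_closed_set[OF closedK]) auto
qed

lemma gauge_iff: assumes "y \<noteq> 0" "0 < s" shows "inverse s *\<^sub>R y \<in> K \<longleftrightarrow> gauge_of K y \<le> s"
proof
  assume "inverse s *\<^sub>R y \<in> K" then show "gauge_of K y \<le> s" using gauge_le assms by blast
next
  assume "gauge_of K y \<le> s" then show "inverse s *\<^sub>R y \<in> K"
    using upward[OF gauge_pos[OF assms(1)] at_gauge[OF assms(1)]] by blast
qed

lemma gauge_frontier: assumes "y \<noteq> 0" shows "inverse (gauge_of K y) *\<^sub>R y \<in> frontier K"
proof -
  let ?g = "gauge_of K y"
  have g: "0 < ?g" using gauge_pos assms by auto
  have "inverse ?g *\<^sub>R y \<notin> interior K"
  proof
    assume a: "inverse ?g *\<^sub>R y \<in> interior K"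
    have "((\<lambda>s. inverse s *\<^sub>R y) \<longlongrightarrow> inverse ?g *\<^sub>R y) (at_left ?g)"
      using g by (intro tendsto_intros) auto
    then have "eventually (\<lambda>s. inverse s *\<^sub>R y \<in> interior K) (at_left ?g)"
      using a by (metis open_interior topological_tendstoD)
    moreover have "eventually (\<lambda>s. 0 < s \<and> s < ?g) (at_left ?g)"
      using g by (auto simp: eventually_at_left_field intro: exI[of _ 0])
    ultimately have "eventually (\<lambda>s. 0 < s \<and> s < ?g \<and> inverse s *\<^sub>R y \<in> interior K) (at_left ?g)"
      by eventually_elim auto
    then have "\<exists>s. 0 < s \<and> s < ?g \<and> inverse s *\<^sub>R y \<in> interior K"
      by (intro eventually_happens'[of "at_left ?g"]) auto
    then obtain s where s: "0 < s" "s < ?g" "inverse s *\<^sub>R y \<in> interior K" by blast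
    then have "?g \<le> s" using gauge_le[of s y] interior_subset by blast
    then show False using s by linarith
  qed
  then show ?thesis using at_gauge[OF assms] closedK
    unfolding frontier_def using closure_closed[OF closedK] by blast
qed

lemma frontK: "frontier K \<subseteq> K" using closedK frontier_subset_closed by blast

lemma frontier_norm: "X \<in> frontier K \<Longrightarrow> r \<le> norm X"
proof (rule ccontr)
  assume "X \<in> frontier K" "\<not> r \<le> norm X"
  then have "X \<in> ball 0 r" by auto
  moreover have "ball 0 r \<subseteq> interior K"
    using inK by (metis ball_subset_cball interior_ball interior_mono subset_trans)
  ultimately show False using \<open>X \<in> frontier K\<close> by (metis DiffE frontier_def subsetD)
qed

lemma frontier_norm2: "X \<in> frontier K \<Longrightarrow> norm X \<le> R"
  using outK frontK by fastforce

lemma gauge_one: assumes "X \<in> frontier K" shows "gauge_of K X = 1"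
proof -
  have X0: "X \<noteq> 0" using frontier_norm[OF assms] r by auto
  have XK: "X \<in> K" using assms frontK by blast
  have le: "gauge_of K X \<le> 1" using gauge_le[of 1 X] XK by simp
  show ?thesis
  proof (rule ccontr)
    assume "gauge_of K X \<noteq> 1"
    then have lt: "gauge_of K X < 1" using le by auto
    let ?g = "gauge_of K X"
    have g: "0 < ?g" using gauge_pos X0 by auto
    have "inverse ?g *\<^sub>R X - (1 - ?g) *\<^sub>R (inverse ?g *\<^sub>R X - 0) \<in> interior K"
      using lt g by (intro mem_interior_convex_shrink[OF vK zero_int at_gauge[OF X0]]) auto
    moreover have "inverse ?g *\<^sub>R X - (1 - ?g) *\<^sub>R (inverse ?g *\<^sub>R X - 0) = X"
      using g by (simp add: algebra_simps)
    ultimately show False using assms by (metis DiffE frontier_def)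
  qed
qed


lemma chart_facts:
  assumes Zf: "Z \<in> frontier K" and U: "open U" "Z \<in> U"
    and der: "(\<rho> has_derivative (\<lambda>h. n \<bullet> h)) (at Z)" and n: "n \<noteq> 0"
    and KU: "K \<inter> U = {w\<in>U. \<rho> w \<le> 0}"
  shows "\<rho> Z = 0" and "\<And>w. w \<in> K \<Longrightarrow> n \<bullet> (w - Z) \<le> 0" and "r * norm n \<le> n \<bullet> Z"
proof -
  have ZK: "Z \<in> K" using Zf frontK by blast
  have inKU: "\<And>w. w \<in> U \<Longrightarrow> \<rho> w \<le> 0 \<Longrightarrow> w \<in> K"
  proof -
    fix w assume "w \<in> U" "\<rho> w \<le> 0"
    then have "w \<in> {w\<in>U. \<rho> w \<le> 0}" by simp
    then show "w \<in> K" using KU by (metis IntD1)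
  qed
  have outKU: "\<And>w. w \<in> K \<Longrightarrow> w \<in> U \<Longrightarrow> \<rho> w \<le> 0"
  proof -
    fix w assume "w \<in> K" "w \<in> U"
    then have "w \<in> K \<inter> U" by simp
    then show "\<rho> w \<le> 0" using KU by simp
  qed
  obtain dU where dU: "dU > 0" "ball Z dU \<subseteq> U" using U open_contains_ball by blast
  have alt: "\<forall>e>0. \<exists>d>0. \<forall>w. norm (w - Z) < d \<longrightarrow> \<bar>\<rho> w - \<rho> Z - n \<bullet> (w - Z)\<bar> \<le> e * norm (w - Z)"
    using der unfolding has_derivative_at_alt by simp
  have le0: "\<rho> Z \<le> 0" using ZK U outKU by blast
  show rho0: "\<rho> Z = 0"
  proof (rule ccontr)
    assume "\<rho> Z \<noteq> 0"
    then have neg: "\<rho> Z < 0" using le0 by linarith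
    obtain d where d: "d > 0" "\<forall>w. norm (w - Z) < d \<longrightarrow> \<bar>\<rho> w - \<rho> Z - n \<bullet> (w - Z)\<bar> \<le> 1 * norm (w - Z)"
      using alt by (meson zero_less_one)
    define \<epsilon> where "\<epsilon> = min (min d dU) (- \<rho> Z / (norm n + 1))"
    have "norm n + 1 > 0" by (simp add: add_nonneg_pos)
    then have "- \<rho> Z / (norm n + 1) > 0" using divide_neg_pos[OF neg] by simp
    then have \<epsilon>: "\<epsilon> > 0" using d dU by (simp add: \<epsilon>_def)
    have "ball Z \<epsilon> \<subseteq> K"
    proof
      fix w assume "w \<in> ball Z \<epsilon>"
      then have w: "norm (w - Z) < \<epsilon>" by (simp add: dist_norm norm_minus_commute)
      then have wU: "w \<in> U" using dU by (auto simp: \<epsilon>_def dist_norm norm_minus_commute)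
      have f1: "\<bar>\<rho> w - \<rho> Z - n \<bullet> (w - Z)\<bar> \<le> norm (w - Z)" using d w by (simp add: \<epsilon>_def)
      have f2: "\<bar>n \<bullet> (w - Z)\<bar> \<le> norm n * norm (w - Z)" by (rule Cauchy_Schwarz_ineq2)
      have f3: "(norm n + 1) * norm (w - Z) < - \<rho> Z"
      proof -
        have "norm (w - Z) < - \<rho> Z / (norm n + 1)" using w by (simp add: \<epsilon>_def)
        then show ?thesis by (simp add: field_simps add_pos_nonneg)
      qed
      have f4: "(norm n + 1) * norm (w - Z) = norm n * norm (w - Z) + norm (w - Z)"
        by (simp add: algebra_simps)
      have "\<rho> w < 0" using f1 f2 f3 f4 by linarith
      then show "w \<in> K" using wU inKU by simp
    qed
    then have "Z \<in> interior K" using \<epsilon> by (meson interior_maximal open_ball centre_in_ball subsetD)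
    then show False using Zf by (metis DiffE frontier_def)
  qed
  show nrm: "n \<bullet> (w - Z) \<le> 0" if wK: "w \<in> K" for w
  proof (rule ccontr)
    assume "\<not> n \<bullet> (w - Z) \<le> 0"
    then have a: "n \<bullet> (w - Z) > 0" by simp
    then have wZ: "w \<noteq> Z" by auto
    then have nwZ: "norm (w - Z) > 0" by simp
    have ep: "n \<bullet> (w - Z) / (2 * norm (w - Z)) > 0" using a nwZ by simp
    obtain d where d: "d > 0" "\<forall>v. norm (v - Z) < d \<longrightarrow> \<bar>\<rho> v - \<rho> Z - n \<bullet> (v - Z)\<bar> \<le> (n \<bullet> (w - Z) / (2 * norm (w - Z))) * norm (v - Z)"
      using alt[rule_format, OF ep] by blast
    define s where "s = min 1 (min d dU / (2 * norm (w - Z)))"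
    have s: "0 < s" "s \<le> 1" using d dU nwZ by (auto simp: s_def)
    have sm: "s * norm (w - Z) < min d dU"
    proof -
      have "s \<le> min d dU / (2 * norm (w - Z))" by (simp add: s_def)
      then have "s * norm (w - Z) \<le> min d dU / 2" using nwZ by (simp add: field_simps)
      then show ?thesis using d dU by linarith
    qed
    define v where "v = Z + s *\<^sub>R (w - Z)"
    have vK: "v \<in> K"
    proof -
      have "v = (1 - s) *\<^sub>R Z + s *\<^sub>R w" by (simp add: v_def algebra_simps)
      then show ?thesis using convexD[OF vK ZK wK, of "1 - s" s] s by simp
    qed
    have nv: "norm (v - Z) = s * norm (w - Z)" using s by (simp add: v_def)
    have vU: "v \<in> U" using dU sm nv by (auto simp: dist_norm norm_minus_commute)
    have "norm (v - Z) < d" using sm nv by simp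
    then have "\<bar>\<rho> v - \<rho> Z - n \<bullet> (v - Z)\<bar> \<le> (n \<bullet> (w - Z) / (2 * norm (w - Z))) * norm (v - Z)"
      using d(2) by blast
    also have "\<dots> = s * (n \<bullet> (w - Z)) / 2" using nwZ nv by (simp add: field_simps)
    finally have i1: "\<bar>\<rho> v - \<rho> Z - n \<bullet> (v - Z)\<bar> \<le> s * (n \<bullet> (w - Z)) / 2" .
    have i2: "n \<bullet> (v - Z) = s * (n \<bullet> (w - Z))" by (simp add: v_def inner_scaleR_right)
    have "0 < s * (n \<bullet> (w - Z))" using s a by simp
    then have "\<rho> v > 0" using i1 i2 rho0 by linarith
    then show False using vK vU outKU by fastforce
  qed
  have "(r / norm n) *\<^sub>R n \<in> K" using inK r n by auto
  from nrm[OF this] have "n \<bullet> ((r / norm n) *\<^sub>R n) \<le> n \<bullet> Z" by (simp add: inner_diff_right)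
  moreover have "n \<bullet> ((r / norm n) *\<^sub>R n) = r * norm n"
    using n by (simp add: inner_commute power2_norm_eq_inner[symmetric] power2_eq_square)
  ultimately show "r * norm n \<le> n \<bullet> Z" by simp
qed


end


lemma unique_grad:
  fixes f :: "'a::euclidean_space \<Rightarrow> real"
  assumes "(f has_derivative (\<lambda>h. u \<bullet> h)) (at x)" "(f has_derivative (\<lambda>h. v \<bullet> h)) (at x)"
  shows "u = v"
proof -
  have "(\<lambda>h. u \<bullet> h) = (\<lambda>h. v \<bullet> h)" using has_derivative_unique[OF assms] .
  then have "u \<bullet> (u - v) = v \<bullet> (u - v)" by metis
  then have "(u - v) \<bullet> (u - v) = 0" by (simp add: inner_diff_left)
  then show ?thesis by simp
qed

lemma smooth_grad_cont:
  assumes U: "open U" and sm: "smooth_fun_on U \<rho>"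
    and der: "\<forall>y\<in>U. (\<rho> has_derivative (\<lambda>h. g y \<bullet> h)) (at y)"
  shows "continuous_on U g"
proof -
  have "Ck_on (Suc (Suc 0)) U \<rho>" using sm unfolding smooth_fun_on_def by blast
  then obtain g2 where g2: "\<forall>y\<in>U. (\<rho> has_derivative (\<lambda>h. g2 y \<bullet> h)) (at y)"
    and c2: "\<forall>b\<in>Basis. Ck_on (Suc 0) U (\<lambda>y. g2 y \<bullet> b)" by auto
  have "continuous_on U (\<lambda>y. g2 y \<bullet> b)" if b: "b \<in> Basis" for b
  proof -
    obtain g3 where g3: "\<forall>y\<in>U. ((\<lambda>y. g2 y \<bullet> b) has_derivative (\<lambda>h. g3 y \<bullet> h)) (at y)"
      using c2 b by auto
    show ?thesis
      by (rule continuous_at_imp_continuous_on) (use g3 has_derivative_continuous in blast)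
  qed
  then have cg2: "continuous_on U g2" by (subst continuous_on_componentwise) blast
  have "\<forall>y\<in>U. g y = g2 y"
  proof
    fix y assume "y \<in> U"
    then show "g y = g2 y" using unique_grad[of \<rho> "g y" y "g2 y"] der g2 by blast
  qed
  then show ?thesis using cg2 continuous_on_cong by force
qed


context gk begin
lemma gauge_deriv_chart:
  assumes y: "y \<noteq> 0" and U: "open U" "Z \<in> U" and Zdef: "Z = inverse (gauge_of K y) *\<^sub>R y"
    and der: "(\<rho> has_derivative (\<lambda>h. n \<bullet> h)) (at Z)" and n: "n \<noteq> 0"
    and KU: "K \<inter> U = {w\<in>U. \<rho> w \<le> 0}"
  shows "(gauge_of K has_derivative (\<lambda>h. (inverse (n \<bullet> Z) *\<^sub>R n) \<bullet> h)) (at y)"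
proof -
  define g0 where "g0 = gauge_of K y"
  define c where "c = n \<bullet> Z"
  have g0: "0 < g0" using gauge_pos[OF y] by (simp add: g0_def)
  have Zf: "Z \<in> frontier K" using gauge_frontier[OF y] Zdef by simp
  note cf = chart_facts[OF Zf U der n KU]
  have inKU: "\<And>w. w \<in> U \<Longrightarrow> \<rho> w \<le> 0 \<Longrightarrow> w \<in> K"
  proof -
    fix w assume "w \<in> U" "\<rho> w \<le> 0"
    then have "w \<in> {w\<in>U. \<rho> w \<le> 0}" by simp
    then show "w \<in> K" using KU by (metis IntD1)
  qed
  have nn: "0 < norm n" using n by simp
  have c: "0 < c" using cf(3) r nn unfolding c_def by (smt (verit) mult_pos_pos)
  have yZ: "y = g0 *\<^sub>R Z" using Zdef g0 by (simp add: g0_def)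
  have ny: "n \<bullet> y = g0 * c" using yZ by (simp add: c_def)
  have lowerb: "n \<bullet> y' \<le> c * gauge_of K y'" if "y' \<noteq> 0" for y'
  proof -
    have gp: "0 < gauge_of K y'" using gauge_pos[OF that] .
    have "n \<bullet> (inverse (gauge_of K y') *\<^sub>R y' - Z) \<le> 0" using cf(2)[OF at_gauge[OF that]] .
    then have "inverse (gauge_of K y') * (n \<bullet> y') \<le> c" by (simp add: inner_diff_right c_def)
    then show ?thesis using gp by (simp add: field_simps)
  qed
  have alt: "\<forall>e>0. \<exists>d>0. \<forall>w. norm (w - Z) < d \<longrightarrow> \<bar>\<rho> w - \<rho> Z - n \<bullet> (w - Z)\<bar> \<le> e * norm (w - Z)"
    using der unfolding has_derivative_at_alt by simp
  obtain dU where dU: "dU > 0" "ball Z dU \<subseteq> U" using U open_contains_ball by blast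
  show ?thesis unfolding has_derivative_at_alt
  proof (intro conjI allI impI)
    show "bounded_linear (\<lambda>h. (inverse (n \<bullet> Z) *\<^sub>R n) \<bullet> h)" by (rule bounded_linear_inner_right)
    fix e :: real assume e: "0 < e"
    define A where "A = 1 + norm n * norm Z / c + e * norm Z"
    have A: "1 \<le> A" using c e by (simp add: A_def)
    define e' where "e' = e * c / (2 * A)"
    have e': "0 < e'" using e c A by (simp add: e'_def)
    obtain d1 where d1: "d1 > 0" "\<forall>w. norm (w - Z) < d1 \<longrightarrow> \<bar>\<rho> w - \<rho> Z - n \<bullet> (w - Z)\<bar> \<le> e' * norm (w - Z)"
      using alt[rule_format, OF e'] by blast
    define d where "d = min (min (norm y) (g0 * c / (2 * norm n))) (g0 * min d1 dU / (2 * A))"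
    have d: "0 < d" using y g0 c nn d1 dU A by (simp add: d_def)
    show "\<exists>d>0. \<forall>y'. norm (y' - y) < d \<longrightarrow>
        norm (gauge_of K y' - gauge_of K y - (inverse (n \<bullet> Z) *\<^sub>R n) \<bullet> (y' - y)) \<le> e * norm (y' - y)"
    proof (intro exI[of _ d] conjI allI impI d)
      fix y' assume hy: "norm (y' - y) < d"
      define h where "h = y' - y"
      have hd: "norm h < d" using hy by (simp add: h_def)
      have y'0: "y' \<noteq> 0"
      proof
        assume "y' = 0" then have "norm h = norm y" by (simp add: h_def)
        then show False using hd by (simp add: d_def)
      qed
      have vh: "(inverse (n \<bullet> Z) *\<^sub>R n) \<bullet> (y' - y) = (n \<bullet> h) / c"
        by (simp add: h_def c_def field_simps)
      have gy: "gauge_of K y = (n \<bullet> y) / c" using ny c by (simp add: g0_def)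
      have low: "0 \<le> gauge_of K y' - gauge_of K y - (n \<bullet> h) / c"
      proof -
        have "n \<bullet> y' \<le> c * gauge_of K y'" by (rule lowerb[OF y'0])
        then have "(n \<bullet> y') / c \<le> gauge_of K y'" using c by (simp add: field_simps)
        moreover have "(n \<bullet> y') / c = (n \<bullet> y) / c + (n \<bullet> h) / c"
          by (simp add: h_def inner_diff_right add_divide_distrib[symmetric])
        ultimately show ?thesis using gy by linarith
      qed
      define s where "s = g0 + (n \<bullet> h) / c + e * norm h"
      have nh: "\<bar>n \<bullet> h\<bar> \<le> norm n * norm h" by (rule Cauchy_Schwarz_ineq2)
      have nhc: "\<bar>(n \<bullet> h) / c\<bar> \<le> norm n * norm h / c" using nh c by (simp add: field_simps)
      have "norm h < g0 * c / (2 * norm n)" using hd by (simp add: d_def)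
      then have "norm h * (2 * norm n) < g0 * c" using nn by (simp add: pos_less_divide_eq)
      then have "norm n * norm h < (g0 / 2) * c" by (simp add: algebra_simps)
      then have "norm n * norm h / c < g0 / 2" using c by (simp add: pos_divide_less_eq)
      moreover have "0 \<le> e * norm h" using e by simp
      moreover have "- \<bar>(n \<bullet> h) / c\<bar> \<le> (n \<bullet> h) / c" using abs_ge_minus_self[of "(n \<bullet> h) / c"] by linarith
      ultimately have s2: "g0 / 2 < s" unfolding s_def using nhc by linarith
      have s0: "0 < s" using s2 g0 by linarith
      define q where "q = h - ((n \<bullet> h) / c + e * norm h) *\<^sub>R Z"
      have y'q: "y' = s *\<^sub>R Z + q"
        by (simp add: q_def s_def h_def yZ algebra_simps)
      have nq: "n \<bullet> q = - (e * norm h * c)"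
        using c by (simp add: q_def inner_diff_right c_def[symmetric] field_simps)
      have qn: "norm q \<le> A * norm h"
      proof -
        have "norm q \<le> norm h + norm (((n \<bullet> h) / c + e * norm h) *\<^sub>R Z)"
          unfolding q_def by (rule norm_triangle_ineq4)
        also have "norm (((n \<bullet> h) / c + e * norm h) *\<^sub>R Z) = \<bar>(n \<bullet> h) / c + e * norm h\<bar> * norm Z" by simp
        also have "\<bar>(n \<bullet> h) / c + e * norm h\<bar> \<le> norm n * norm h / c + e * norm h"
          using nhc \<open>0 \<le> e * norm h\<close> abs_triangle_ineq[of "(n \<bullet> h) / c" "e * norm h"] abs_of_nonneg[of "e * norm h"] by linarith
        then have "\<bar>(n \<bullet> h) / c + e * norm h\<bar> * norm Z \<le> (norm n * norm h / c + e * norm h) * norm Z"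
          by (simp add: mult_right_mono)
        finally show ?thesis by (simp add: A_def algebra_simps)
      qed
      define w where "w = inverse s *\<^sub>R y'"
      have wZ: "w - Z = inverse s *\<^sub>R q" using s0 by (simp add: w_def y'q algebra_simps)
      have nwZ: "norm (w - Z) = norm q / s" using s0 by (simp add: wZ field_simps)
      have nwZ2: "norm (w - Z) \<le> 2 * A * norm h / g0"
      proof -
        have "norm q / s \<le> A * norm h / s" using qn s0 by (simp add: divide_right_mono)
        also have "\<dots> \<le> A * norm h / (g0 / 2)"
          using s2 g0 A by (intro divide_left_mono) (auto intro: mult_nonneg_nonneg)
        also have "A * norm h / (g0 / 2) = 2 * A * norm h / g0" by simp
        finally show ?thesis using nwZ by simp
      qed
      have "norm h < g0 * min d1 dU / (2 * A)" using hd by (simp add: d_def)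
      then have "norm h * (2 * A) < g0 * min d1 dU" using A by (subst (asm) pos_less_divide_eq) auto
      moreover have "norm h * (2 * A) = 2 * A * norm h" "g0 * min d1 dU = min d1 dU * g0" by (simp_all add: mult_ac)
      ultimately have "2 * A * norm h < min d1 dU * g0" by simp
      then have "2 * A * norm h / g0 < min d1 dU" using g0 by (simp only: pos_divide_less_eq)
      then have wsmall: "norm (w - Z) < d1" "norm (w - Z) < dU" using nwZ2 by auto
      have wU: "w \<in> U" using wsmall dU by (auto simp: dist_norm norm_minus_commute)
      have "\<bar>\<rho> w - \<rho> Z - n \<bullet> (w - Z)\<bar> \<le> e' * norm (w - Z)" using d1 wsmall by blast
      then have r1: "\<rho> w \<le> n \<bullet> (w - Z) + e' * norm (w - Z)" using cf(1) by linarith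
      have r2: "n \<bullet> (w - Z) = - (e * norm h * c) / s" using s0 by (simp add: wZ nq field_simps)
      have r3: "e' * norm (w - Z) \<le> e' * (A * norm h) / s"
        using e' qn s0 nwZ by (simp add: divide_right_mono)
      have r4: "e' * (A * norm h) = e * norm h * c / 2" using A by (simp add: e'_def field_simps)
      have "- (e * norm h * c) / s + e * norm h * c / 2 / s \<le> 0"
        using e c s0 by (simp add: field_simps)
      moreover have r5: "e' * norm (w - Z) \<le> e * norm h * c / 2 / s" using r3 r4 by simp
      ultimately have "\<rho> w \<le> 0" using r1 r2 by linarith
      then have "w \<in> K" using wU inKU by blast
      then have up: "gauge_of K y' \<le> s" using gauge_le[OF s0] by (simp add: w_def)
      have "\<bar>gauge_of K y' - gauge_of K y - (n \<bullet> h) / c\<bar> \<le> e * norm h"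
      proof -
        have up': "gauge_of K y' - gauge_of K y - (n \<bullet> h) / c \<le> e * norm h"
          using up unfolding s_def g0_def by linarith
        show ?thesis by (rule abs_leI; insert low up'; linarith)
      qed
      then show "norm (gauge_of K y' - gauge_of K y - (inverse (n \<bullet> Z) *\<^sub>R n) \<bullet> (y' - y)) \<le> e * norm (y' - y)"
        using vh by (simp add: h_def)
    qed
  qed
qed


definition ggrad :: "'a \<Rightarrow> 'a" where
  "ggrad y = (SOME v. (gauge_of K has_derivative (\<lambda>h. v \<bullet> h)) (at y))"

lemma gauge_C1:
  assumes sb: "smooth_boundary K" and y: "y \<noteq> 0"
  shows "(gauge_of K has_derivative (\<lambda>h. ggrad y \<bullet> h)) (at y)"
    and "norm (ggrad y) \<le> 1 / r" and "isCont ggrad y" and "isCont (gauge_of K) y"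
proof -
  define p where "p = (\<lambda>y. inverse (gauge_of K y) *\<^sub>R y)"
  have Zf: "p y \<in> frontier K" using gauge_frontier[OF y] by (simp add: p_def)
  obtain U \<rho> g where U: "open U" "p y \<in> U" and sm: "smooth_fun_on U \<rho>"
    and dg: "\<forall>w\<in>U. (\<rho> has_derivative (\<lambda>h. g w \<bullet> h)) (at w) \<and> g w \<noteq> 0"
    and KU: "K \<inter> U = {w\<in>U. \<rho> w \<le> 0}"
    using bspec[OF sb[unfolded smooth_boundary_def] Zf] by blast
  have cg: "continuous_on U g" using smooth_grad_cont[OF U(1) sm] dg by blast
  define F where "F = (\<lambda>y'. inverse (g (p y') \<bullet> p y') *\<^sub>R g (p y'))"
  have gr: "ggrad y' = F y' \<and> (gauge_of K has_derivative (\<lambda>h. ggrad y' \<bullet> h)) (at y')"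
    if y': "y' \<noteq> 0" "p y' \<in> U" for y'
  proof -
    have d: "(gauge_of K has_derivative (\<lambda>h. F y' \<bullet> h)) (at y')"
      unfolding F_def
      by (rule gauge_deriv_chart[OF y'(1) U(1) y'(2) _ _ _ KU]) (use dg y' in \<open>auto simp: p_def\<close>)
    then have d2: "(gauge_of K has_derivative (\<lambda>h. ggrad y' \<bullet> h)) (at y')"
      unfolding ggrad_def by (rule someI)
    show ?thesis using unique_grad[OF d d2] d2 by simp
  qed
  show d: "(gauge_of K has_derivative (\<lambda>h. ggrad y \<bullet> h)) (at y)" using gr[OF y U(2)] by blast
  have Fy: "ggrad y = F y" using gr[OF y U(2)] by blast
  have cf: "r * norm (g (p y)) \<le> g (p y) \<bullet> p y"
    using chart_facts(3)[OF Zf U(1) U(2) _ _ KU] dg U(2) by blast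
  have gn: "0 < norm (g (p y))" using dg U(2) by simp
  have gp: "0 < g (p y) \<bullet> p y" using cf gn r by (smt (verit) mult_pos_pos)
  have "norm (F y) = norm (g (p y)) / (g (p y) \<bullet> p y)" using gp by (simp add: F_def divide_inverse_commute)
  also have "\<dots> \<le> 1 / r" using cf gp r gn by (simp add: field_simps)
  finally show "norm (ggrad y) \<le> 1 / r" using Fy by simp
  show cgy: "isCont (gauge_of K) y" using d has_derivative_continuous by blast
  have cp: "isCont p y" unfolding p_def using cgy gauge_pos[OF y]
    by (intro continuous_intros) auto
  have cgp: "isCont g (p y)" using cg U continuous_on_eq_continuous_at by blast
  have cgo: "isCont (\<lambda>y'. g (p y')) y" by (rule isCont_o2[OF cp cgp])
  have cF: "isCont F y" unfolding F_def using cgo cp gp by (intro continuous_intros) auto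
  have ev1: "eventually (\<lambda>y'. p y' \<in> U) (nhds y)"
  proof -
    have "(p \<longlongrightarrow> p y) (nhds y)" using cp by (simp add: isCont_def tendsto_at_iff_tendsto_nhds)
    then show ?thesis using topological_tendstoD U by blast
  qed
  have ev2: "eventually (\<lambda>y'. y' \<noteq> 0) (nhds y)" using y by (rule t1_space_nhds)
  have "eventually (\<lambda>y'. ggrad y' = F y') (nhds y)"
    using ev1 ev2 by eventually_elim (use gr in blast)
  then show "isCont ggrad y" using cF isCont_cong by blast
qed

end


lemma lin_helper: "(r::real) < 10 * p \<Longrightarrow> 2 * p \<le> q \<Longrightarrow> q \<le> a \<Longrightarrow> r / 5 \<le> a"
  by linarith

lemma arith_c1:
  fixes a r D t :: real
  assumes "0 \<le> t" "t \<le> 1" "0 \<le> D" "0 < r"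
    and "r - 5 * t * D \<le> a" "r - 5 * (1 - t) * D \<le> a" "4 * D * t * (1 - t) \<le> a"
  shows "r / 5 \<le> a"
proof (cases "10 * t * D \<le> r \<or> 10 * (1 - t) * D \<le> r")
  case True
  have e: "5 * (1 - t) * D = 5 * D - 5 * (t * D)" "10 * (1 - t) * D = 10 * D - 10 * (t * D)"
    "5 * t * D = 5 * (t * D)" "10 * t * D = 10 * (t * D)" by (simp_all add: algebra_simps)
  from True show ?thesis using assms unfolding e by linarith
next
  case False
  then have "\<not> 10 * t * D \<le> r" "\<not> 10 * (1 - t) * D \<le> r" by simp_all
  then have f: "r < 10 * (t * D)" "r < 10 * ((1 - t) * D)" by (simp_all only: mult.assoc not_le)
  show ?thesis
  proof (cases "t \<le> 1/2")
    case True
    have "0 \<le> 2 * (t * D) * (1 - 2 * t)" using True assms by simp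
    moreover have "4 * D * t * (1 - t) = 2 * (t * D) + 2 * (t * D) * (1 - 2 * t)" by (simp add: algebra_simps)
    ultimately have "2 * (t * D) \<le> 4 * D * t * (1 - t)" by linarith
    then show ?thesis using lin_helper[OF f(1) _ assms(7)] by blast
  next
    case False
    have "0 \<le> 2 * ((1 - t) * D) * (2 * t - 1)" using False assms by simp
    moreover have "4 * D * t * (1 - t) = 2 * ((1 - t) * D) + 2 * ((1 - t) * D) * (2 * t - 1)" by (simp add: algebra_simps)
    ultimately have "2 * ((1 - t) * D) \<le> 4 * D * t * (1 - t)" by linarith
    then show ?thesis using lin_helper[OF f(2) _ assms(7)] by blast
  qed
qed

lemma exists_W:
  fixes X Y :: "'a::euclidean_space"
  assumes "DIM('a) \<ge> 2"
  obtains W where "norm W = 1" "W \<bullet> (X - Y) = 0" "0 \<le> W \<bullet> X"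
proof -
  obtain y where y: "y \<noteq> 0" "orthogonal (X - Y) y" using orthogonal_to_vector_exists[OF assms] by blast
  define W0 where "W0 = y /\<^sub>R norm y"
  have W0: "norm W0 = 1" "W0 \<bullet> (X - Y) = 0"
    using y by (auto simp: W0_def orthogonal_def inner_commute)
  show ?thesis
  proof (cases "0 \<le> W0 \<bullet> X")
    case True then show ?thesis using that W0 by blast
  next
    case False
    then show ?thesis using that[of "- W0"] W0 by simp
  qed
qed

definition curveC :: "real \<Rightarrow> real \<Rightarrow> real" where
  "curveC r R = 25 * R / r + 1375 * R ^ 3 / r ^ 3"


context gk begin

lemma curve_bound:
  assumes sb: "smooth_boundary K" and dim: "DIM('a) \<ge> 2"
    and X: "X \<in> frontier K" and Y: "Y \<in> frontier K"
  shows "boundary_dist K X Y \<le> ereal (curveC r R * dist X Y)"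
proof -
  define D where "D = dist X Y"
  have D0: "0 \<le> D" by (simp add: D_def)
  have nXY: "norm (Y - X) = D" "norm (X - Y) = D" by (simp_all add: D_def dist_norm norm_minus_commute)
  have Xr: "r \<le> norm X" "norm X \<le> R" using frontier_norm[OF X] frontier_norm2[OF X] by auto
  have Yr: "r \<le> norm Y" "norm Y \<le> R" using frontier_norm[OF Y] frontier_norm2[OF Y] by auto
  have D2R: "D \<le> 2 * R" using norm_triangle_ineq4[of X Y] nXY Xr Yr by linarith
  obtain W where W: "norm W = 1" "W \<bullet> (X - Y) = 0" "0 \<le> W \<bullet> X" using exists_W[OF dim] by blast
  have WY: "W \<bullet> Y = W \<bullet> X" using W(2) by (simp add: inner_diff_right)
  define c where "c = (\<lambda>t. (1 - t) *\<^sub>R X + t *\<^sub>R Y + (4 * D * t * (1 - t)) *\<^sub>R W)"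
  define c' where "c' = (\<lambda>t::real. (Y - X) + (4 * D * (1 - 2 * t)) *\<^sub>R W)"
  have cder: "(c has_vector_derivative c' t) (at t)" for t
    unfolding c_def c'_def
    by (auto intro!: derivative_eq_intros simp: algebra_simps)
  have ccont: "isCont c t" for t unfolding c_def by (intro continuous_intros)
  have c0: "c 0 = X" "c 1 = Y" by (simp_all add: c_def)
  have cX: "norm (c t - X) \<le> 5 * t * D" if t: "0 \<le> t" "t \<le> 1" for t
  proof -
    have e: "c t - X = t *\<^sub>R (Y - X) + (4 * D * t * (1 - t)) *\<^sub>R W" by (simp add: c_def algebra_simps)
    have "norm (c t - X) \<le> norm (t *\<^sub>R (Y - X)) + norm ((4 * D * t * (1 - t)) *\<^sub>R W)"
      unfolding e by (rule norm_triangle_ineq)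
    also have "\<dots> = t * D + 4 * D * t * (1 - t)" using t D0 W nXY by simp
    also have "\<dots> \<le> 5 * t * D"
    proof -
      have "4 * D * t * (1 - t) \<le> 4 * D * t * 1" using t D0 by (intro mult_left_mono) auto
      then show ?thesis by simp
    qed
    finally show ?thesis .
  qed
  have cY: "norm (c t - Y) \<le> 5 * (1 - t) * D" if t: "0 \<le> t" "t \<le> 1" for t
  proof -
    have e: "c t - Y = (1 - t) *\<^sub>R (X - Y) + (4 * D * t * (1 - t)) *\<^sub>R W" by (simp add: c_def algebra_simps)
    have "norm (c t - Y) \<le> norm ((1 - t) *\<^sub>R (X - Y)) + norm ((4 * D * t * (1 - t)) *\<^sub>R W)"
      unfolding e by (rule norm_triangle_ineq)
    also have "\<dots> = (1 - t) * D + 4 * D * t * (1 - t)" using t D0 W nXY by simp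
    also have "\<dots> \<le> 5 * (1 - t) * D"
    proof -
      have "4 * D * (1 - t) * t \<le> 4 * D * (1 - t) * 1" using t D0 by (intro mult_left_mono) auto
      then show ?thesis by (simp add: algebra_simps)
    qed
    finally show ?thesis .
  qed
  have cW: "4 * D * t * (1 - t) \<le> norm (c t)" if t: "0 \<le> t" "t \<le> 1" for t
  proof -
    have WW: "W \<bullet> W = 1" using W(1) power2_norm_eq_inner[of W] by simp
    have "c t \<bullet> W = (1 - t) * (X \<bullet> W) + t * (Y \<bullet> W) + 4 * D * t * (1 - t) * (W \<bullet> W)"
      by (simp add: c_def inner_add_left)
    also have "\<dots> = (1 - t) * (W \<bullet> X) + t * (W \<bullet> X) + 4 * D * t * (1 - t)"
      using WW WY by (simp add: inner_commute)
    also have "\<dots> = W \<bullet> X + 4 * D * t * (1 - t)" by (simp add: algebra_simps)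
    finally have "4 * D * t * (1 - t) \<le> c t \<bullet> W" using W(3) by linarith
    also have "c t \<bullet> W \<le> norm (c t)" using norm_cauchy_schwarz[of "c t" W] W(1) by simp
    finally show ?thesis .
  qed
  have clow: "r / 5 \<le> norm (c t)" if t: "0 \<le> t" "t \<le> 1" for t
  proof (rule arith_c1[OF t D0 r])
    show "r - 5 * t * D \<le> norm (c t)" using cX[OF t] Xr norm_triangle_ineq2[of X "X - c t"]
      by (simp add: norm_minus_commute)
    show "r - 5 * (1 - t) * D \<le> norm (c t)" using cY[OF t] Yr 
      by (smt (verit) norm_triangle_ineq2 norm_minus_commute)
    show "4 * D * t * (1 - t) \<le> norm (c t)" by (rule cW[OF t])
  qed
  have cnz: "c t \<noteq> 0" if "0 \<le> t" "t \<le> 1" for t using clow[OF that] r by auto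
  have chigh: "norm (c t) \<le> 11 * R" if t: "0 \<le> t" "t \<le> 1" for t
  proof -
    have "norm (c t) \<le> norm X + norm (c t - X)" by (smt (verit) norm_triangle_ineq2)
    moreover have "5 * t * D \<le> 5 * 1 * (2 * R)" using t D0 D2R by (intro mult_mono) auto
    ultimately show ?thesis using cX[OF t] Xr by linarith
  qed
  have c'b: "norm (c' t) \<le> 5 * D" if t: "0 \<le> t" "t \<le> 1" for t
  proof -
    have "norm (c' t) \<le> norm (Y - X) + norm ((4 * D * (1 - 2 * t)) *\<^sub>R W)"
      unfolding c'_def by (rule norm_triangle_ineq)
    also have "\<dots> = D + 4 * D * \<bar>1 - 2 * t\<bar>" using W(1) nXY D0 by (simp add: abs_mult)
    also have "\<dots> \<le> D + 4 * D * 1" using t D0 by (intro add_left_mono mult_left_mono) auto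
    finally show ?thesis by simp
  qed
  have c'cont: "continuous_on {0..1} c'" unfolding c'_def by (intro continuous_intros)
  define \<gamma> where "\<gamma> = (\<lambda>t. gauge_of K (c t))"
  define a where "a = (\<lambda>t. ggrad (c t) \<bullet> c' t)"
  define \<sigma> where "\<sigma> = (\<lambda>t. inverse (\<gamma> t) *\<^sub>R c t)"
  define \<sigma>' where "\<sigma>' = (\<lambda>t. inverse (\<gamma> t) *\<^sub>R c' t + (- (a t * inverse (\<gamma> t ^ Suc (Suc 0)))) *\<^sub>R c t)"
  have gpos: "0 < \<gamma> t" if "0 \<le> t" "t \<le> 1" for t using gauge_pos[OF cnz[OF that]] by (simp add: \<gamma>_def)
  have \<gamma>der: "(\<gamma> has_real_derivative a t) (at t)" if t: "0 \<le> t" "t \<le> 1" for t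
  proof -
    have "((\<lambda>t. gauge_of K (c t)) has_derivative (\<lambda>s. ggrad (c t) \<bullet> (s *\<^sub>R c' t))) (at t)"
      using cder[of t] gauge_C1(1)[OF sb cnz[OF t]] unfolding has_vector_derivative_def
      by (rule has_derivative_compose)
    moreover have "(\<lambda>s. ggrad (c t) \<bullet> (s *\<^sub>R c' t)) = (\<lambda>s. a t * s)"
      by (auto simp: a_def fun_eq_iff)
    ultimately show ?thesis unfolding has_field_derivative_def \<gamma>_def by simp
  qed
  have \<sigma>der: "(\<sigma> has_vector_derivative \<sigma>' t) (at t within {0..1})" if t: "t \<in> {0..1}" for t
  proof -
    have "((\<lambda>t. inverse (\<gamma> t)) has_real_derivative (- (a t * inverse (\<gamma> t ^ Suc (Suc 0))))) (at t)"
    proof -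
      have t': "0 \<le> t" "t \<le> 1" using t by auto
      have "\<gamma> t \<noteq> 0" using gpos[OF t'] by simp
      then show ?thesis using DERIV_inverse_fun[OF \<gamma>der[OF t']] by blast
    qed
    then have "(\<sigma> has_vector_derivative \<sigma>' t) (at t)"
      unfolding \<sigma>_def \<sigma>'_def using cder[of t] by (rule has_vector_derivative_scaleR)
    then show ?thesis by (rule has_vector_derivative_at_within)
  qed
  have \<gamma>cont: "isCont \<gamma> t" if "0 \<le> t" "t \<le> 1" for t
    unfolding \<gamma>_def by (rule isCont_o2[OF ccont gauge_C1(4)[OF sb cnz[OF that]]])
  have gcont: "isCont (\<lambda>t. ggrad (c t)) t" if "0 \<le> t" "t \<le> 1" for t
    by (rule isCont_o2[OF ccont gauge_C1(3)[OF sb cnz[OF that]]])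
  have c'c: "isCont c' t" for t unfolding c'_def by (intro continuous_intros)
  have \<sigma>'cont: "continuous_on {0..1} \<sigma>'"
  proof (rule continuous_at_imp_continuous_on, rule ballI)
    fix t :: real assume "t \<in> {0..1}"
    then have t: "0 \<le> t" "t \<le> 1" by auto
    have "isCont a t" unfolding a_def using gcont[OF t] c'c by (intro continuous_intros)
    then show "isCont \<sigma>' t" unfolding \<sigma>'_def
      using \<gamma>cont[OF t] gpos[OF t] c'c ccont by (intro continuous_intros) auto
  qed
  have \<sigma>fr: "\<sigma> ` {0..1} \<subseteq> frontier K"
    using gauge_frontier cnz by (auto simp: \<sigma>_def \<gamma>_def)
  have \<sigma>01: "\<sigma> 0 = X" "\<sigma> 1 = Y" using gauge_one[OF X] gauge_one[OF Y] c0 by (simp_all add: \<sigma>_def \<gamma>_def)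
  have bnd: "norm (\<sigma>' t) \<le> curveC r R * D" if t: "0 \<le> t" "t \<le> 1" for t
  proof -
    define ig where "ig = inverse (\<gamma> t)"
    have g: "0 < \<gamma> t" by (rule gpos[OF t])
    have ig0: "0 < ig" using g by (simp add: ig_def)
    have "norm (c t) / R \<le> \<gamma> t" using gauge_lower[OF cnz[OF t]] by (simp add: \<gamma>_def)
    moreover have "r / 5 / R \<le> norm (c t) / R" using divide_right_mono[OF clow[OF t], of R] Rpos by simp
    ultimately have "r / 5 / R \<le> \<gamma> t" by linarith
    then have igb: "ig \<le> 5 * R / r"
      using r Rpos g unfolding ig_def by (simp add: inverse_eq_divide field_simps)
    have ab: "\<bar>a t\<bar> \<le> 1 / r * (5 * D)"
    proof -
      have "\<bar>a t\<bar> \<le> norm (ggrad (c t)) * norm (c' t)" unfolding a_def by (rule Cauchy_Schwarz_ineq2)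
      also have "\<dots> \<le> 1 / r * (5 * D)"
        using gauge_C1(2)[OF sb cnz[OF t]] c'b[OF t] r by (intro mult_mono) auto
      finally show ?thesis .
    qed
    have "norm (\<sigma>' t) \<le> norm (ig *\<^sub>R c' t) + norm ((- (a t * ig ^ 2)) *\<^sub>R c t)"
    proof -
      have "inverse (\<gamma> t ^ Suc (Suc 0)) = ig ^ 2" by (simp add: ig_def power2_eq_square)
      then have e: "\<sigma>' t = ig *\<^sub>R c' t + (- (a t * ig ^ 2)) *\<^sub>R c t" by (simp add: \<sigma>'_def ig_def)
      show ?thesis unfolding e by (rule norm_triangle_ineq)
    qed
    also have "norm (ig *\<^sub>R c' t) = ig * norm (c' t)" using ig0 by simp
    also have "norm ((- (a t * ig ^ 2)) *\<^sub>R c t) = ig ^ 2 * \<bar>a t\<bar> * norm (c t)"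
      using ig0 by (simp add: abs_mult)
    also have "ig * norm (c' t) \<le> (5 * R / r) * (5 * D)"
      using igb c'b[OF t] ig0 by (intro mult_mono) auto
    also have "ig ^ 2 * \<bar>a t\<bar> * norm (c t) \<le> (5 * R / r) ^ 2 * (1 / r * (5 * D)) * (11 * R)"
      using igb ab chigh[OF t] ig0 D0 r Rpos
      by (intro mult_mono power_mono mult_nonneg_nonneg) auto
    also have "(5 * R / r) * (5 * D) + (5 * R / r) ^ 2 * (1 / r * (5 * D)) * (11 * R) = curveC r R * D"
      using r by (simp add: curveC_def field_simps power2_eq_square power3_eq_cube)
    finally show ?thesis by simp
  qed
  have int\<sigma>': "(\<lambda>t. norm (\<sigma>' t)) integrable_on {0..1}"
    by (rule integrable_continuous_interval) (intro continuous_intros \<sigma>'cont)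
  have ile: "integral {0..1} (\<lambda>t. norm (\<sigma>' t)) \<le> curveC r R * D"
    using integral_le[OF int\<sigma>' integrable_const_ivl[of "curveC r R * D" 0 1]] bnd by auto
  have mem: "ereal (integral {0..1} (\<lambda>t. norm (\<sigma>' t))) \<in> ereal ` {integral {0..1} (\<lambda>t. norm (\<sigma>' t)) | \<sigma> \<sigma>'.
        (\<forall>t\<in>{0..1}. (\<sigma> has_vector_derivative \<sigma>' t) (at t within {0..1::real}))
        \<and> continuous_on {0..1} \<sigma>'
        \<and> \<sigma> ` {0..1} \<subseteq> frontier K \<and> \<sigma> 0 = X \<and> \<sigma> 1 = Y}"
    using \<sigma>der \<sigma>'cont \<sigma>fr \<sigma>01 by blast
  have "boundary_dist K X Y \<le> ereal (integral {0..1} (\<lambda>t. norm (\<sigma>' t)))"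
    unfolding boundary_dist_def by (rule Inf_lower[OF mem])
  also have "\<dots> \<le> ereal (curveC r R * D)" using ile by simp
  finally show ?thesis by (simp add: D_def)
qed

end



lemma hd_parts:
  fixes A B :: "'a::euclidean_space set"
  assumes A: "compact A" and B: "compact B" and h: "hausdorff_dist A B < e"
  shows "\<forall>a\<in>A. infdist a B < e" and "\<forall>b\<in>B. infdist b A < e"
proof -
  have bA: "bdd_above ((\<lambda>a. infdist a B) ` A)"
    by (intro bounded_imp_bdd_above compact_imp_bounded compact_continuous_image A
        continuous_on_infdist continuous_on_id)
  have bB: "bdd_above ((\<lambda>b. infdist b A) ` B)"
    by (intro bounded_imp_bdd_above compact_imp_bounded compact_continuous_image B
        continuous_on_infdist continuous_on_id)
  show "\<forall>a\<in>A. infdist a B < e"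
  proof
    fix a assume a: "a \<in> A"
    have "infdist a B \<le> (SUP a\<in>A. infdist a B)" by (rule cSUP_upper[OF a bA])
    also have "\<dots> \<le> hausdorff_dist A B" unfolding hausdorff_dist_def by simp
    finally show "infdist a B < e" using h by linarith
  qed
  show "\<forall>b\<in>B. infdist b A < e"
  proof
    fix b assume b: "b \<in> B"
    have "infdist b A \<le> (SUP b\<in>B. infdist b A)" by (rule cSUP_upper[OF b bB])
    also have "\<dots> \<le> hausdorff_dist A B" unfolding hausdorff_dist_def by simp
    finally show "infdist b A < e" using h by linarith
  qed
qed

lemma outer_bound:
  fixes A B :: "'a::euclidean_space set"
  assumes B: "closed B" "B \<noteq> {}" "B \<subseteq> cball 0 R0" and h: "\<forall>a\<in>A. infdist a B < e"
  shows "A \<subseteq> cball 0 (R0 + e)"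
proof
  fix a assume a: "a \<in> A"
  obtain b where b: "b \<in> B" "infdist a B = dist a b" using infdist_attains_inf[OF B(1) B(2)] by blast
  have "norm b \<le> R0" using b B(3) by auto
  moreover have "dist a b < e" using h a b by auto
  moreover have "norm a \<le> norm b + dist a b"
    using norm_triangle_ineq[of b "a - b"] by (simp add: dist_norm)
  ultimately show "a \<in> cball 0 (R0 + e)" by simp
qed

lemma inner_bound:
  fixes A B :: "'a::euclidean_space set"
  assumes A: "convex A" "closed A" "A \<noteq> {}" and r0: "0 < r0" and B: "cball 0 r0 \<subseteq> B"
    and h: "\<forall>b\<in>B. infdist b A < r0 / 4"
  shows "cball 0 (r0 / 2) \<subseteq> A"
proof
  fix z :: 'a assume z: "z \<in> cball 0 (r0 / 2)"
  show "z \<in> A"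
  proof (rule ccontr)
    assume "z \<notin> A"
    then obtain a \<beta> where ab: "a \<bullet> z < \<beta>" "\<forall>x\<in>A. a \<bullet> x > \<beta>"
      using separating_hyperplane_closed_point[OF A(1) A(2)] by blast
    have a0: "a \<noteq> 0"
    proof
      assume "a = 0"
      then show False using ab A(3) by auto
    qed
    define \<nu> where "\<nu> = a /\<^sub>R norm a"
    have \<nu>1: "norm \<nu> = 1" using a0 by (simp add: \<nu>_def)
    have \<nu>\<nu>: "\<nu> \<bullet> \<nu> = 1" using \<nu>1 power2_norm_eq_inner[of \<nu>] by simp
    define q where "q = z - (r0 / 2) *\<^sub>R \<nu>"
    have "norm q \<le> norm z + norm ((r0 / 2) *\<^sub>R \<nu>)" unfolding q_def by (rule norm_triangle_ineq4)
    also have "\<dots> \<le> r0 / 2 + r0 / 2" using z \<nu>1 r0 by simp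
    finally have "q \<in> B" using B by auto
    then have iq: "infdist q A < r0 / 4" using h by auto
    obtain x where x: "x \<in> A" "infdist q A = dist q x" using infdist_attains_inf[OF A(2) A(3)] by blast
    have xq: "x - q = (x - z) + (r0 / 2) *\<^sub>R \<nu>" by (simp add: q_def algebra_simps)
    have i1: "\<nu> \<bullet> (x - q) = \<nu> \<bullet> (x - z) + r0 / 2 * (\<nu> \<bullet> \<nu>)"
      unfolding xq by (simp add: inner_add_right)
    have i2: "\<nu> \<bullet> (x - z) = (a \<bullet> x - a \<bullet> z) / norm a"
      by (simp add: \<nu>_def inner_diff_right divide_inverse mult.commute right_diff_distrib)
    have "\<nu> \<bullet> (x - q) = (a \<bullet> x - a \<bullet> z) / norm a + r0 / 2"
      using i1 i2 \<nu>\<nu> by simp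
    moreover have "(a \<bullet> x - a \<bullet> z) / norm a > 0" using ab x a0 by force
    moreover have "\<nu> \<bullet> (x - q) \<le> norm (x - q)" using norm_cauchy_schwarz[of \<nu> "x - q"] \<nu>1 by simp
    ultimately have "r0 / 2 < dist q x" by (simp add: dist_norm norm_minus_commute)
    then show False using iq x r0 by linarith
  qed
qed

lemma curveC_pos: "0 < r \<Longrightarrow> 0 < R \<Longrightarrow> 0 < curveC r R"
  unfolding curveC_def by (intro add_pos_pos divide_pos_pos) auto

theorem lemma5p6:
  fixes \<Omega> :: "'a::euclidean_space set"
  assumes dim: "DIM('a) \<ge> 2"
    and body: "convex_body \<Omega>"
    and C1: "C1_boundary \<Omega>"
    and zero: "0 \<in> interior \<Omega>"
  shows "\<exists>C>0. \<forall>\<Omega>k :: nat \<Rightarrow> 'a set.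
           (\<forall>k. convex_body (\<Omega>k k) \<and> smooth_boundary (\<Omega>k k) \<and> uniformly_convex (\<Omega>k k))
           \<and> (\<lambda>k. hausdorff_dist (\<Omega>k k) \<Omega>) \<longlonglongrightarrow> 0
           \<longrightarrow> (\<exists>K. \<forall>k\<ge>K. \<forall>X\<in>frontier (\<Omega>k k). \<forall>Y\<in>frontier (\<Omega>k k).
                 boundary_dist (\<Omega>k k) X Y \<le> ereal (C * dist X Y))"
proof -
  have cO: "compact \<Omega>" using body by (simp add: convex_body_def)
  obtain r0 where r0: "r0 > 0" "cball 0 r0 \<subseteq> \<Omega>" using zero mem_interior_cball by blast
  obtain R0 where R0: "\<forall>y\<in>\<Omega>. dist 0 y \<le> R0"
    using compact_imp_bounded[OF cO] bounded_any_center by blast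
  have O0: "0 \<in> \<Omega>" using r0 by auto
  have R0pos: "0 \<le> R0" using R0 O0 by force
  have OR: "\<Omega> \<subseteq> cball 0 R0" using R0 by auto
  define r where "r = r0 / 2"
  define R where "R = R0 + r0 / 4"
  have rp: "0 < r" "0 < R" using r0 R0pos by (auto simp: r_def R_def)
  show ?thesis
  proof (intro exI[of _ "curveC r R"] conjI allI impI)
    show "0 < curveC r R" using curveC_pos rp by blast
    fix \<Omega>k :: "nat \<Rightarrow> 'a set"
    assume as: "(\<forall>k. convex_body (\<Omega>k k) \<and> smooth_boundary (\<Omega>k k) \<and> uniformly_convex (\<Omega>k k))
           \<and> (\<lambda>k. hausdorff_dist (\<Omega>k k) \<Omega>) \<longlonglongrightarrow> 0"
    have "eventually (\<lambda>k. hausdorff_dist (\<Omega>k k) \<Omega> < r0 / 4) sequentially"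
      using as r0 by (intro order_tendstoD(2)) auto
    then obtain N where N: "\<forall>k\<ge>N. hausdorff_dist (\<Omega>k k) \<Omega> < r0 / 4"
      unfolding eventually_sequentially by blast
    show "\<exists>K. \<forall>k\<ge>K. \<forall>X\<in>frontier (\<Omega>k k). \<forall>Y\<in>frontier (\<Omega>k k).
                 boundary_dist (\<Omega>k k) X Y \<le> ereal (curveC r R * dist X Y)"
    proof (intro exI[of _ N] allI impI ballI)
      fix k X Y assume k: "N \<le> k" and X: "X \<in> frontier (\<Omega>k k)" and Y: "Y \<in> frontier (\<Omega>k k)"
      have cb: "convex_body (\<Omega>k k)" and sb: "smooth_boundary (\<Omega>k k)" using as by auto
      have cK: "compact (\<Omega>k k)" "convex (\<Omega>k k)" "interior (\<Omega>k k) \<noteq> {}"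
        using cb by (auto simp: convex_body_def)
      have neK: "\<Omega>k k \<noteq> {}" using cK(3) interior_subset by blast
      have hd: "hausdorff_dist (\<Omega>k k) \<Omega> < r0 / 4" using N k by blast
      note hp = hd_parts[OF cK(1) cO hd]
      have inn: "cball 0 r \<subseteq> \<Omega>k k"
        unfolding r_def
        by (rule inner_bound[OF cK(2) compact_imp_closed[OF cK(1)] neK r0(1) r0(2) hp(2)])
      have out: "\<Omega>k k \<subseteq> cball 0 R"
        unfolding R_def using outer_bound[OF compact_imp_closed[OF cO] _ OR hp(1)] O0 by blast
      interpret g: gk "\<Omega>k k" r R
        using cK inn out rp by unfold_locales auto
      show "boundary_dist (\<Omega>k k) X Y \<le> ereal (curveC r R * dist X Y)"
        by (rule g.curve_bound[OF sb dim X Y])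
    qed
  qed
qed


end
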